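(* Let $Q(u,v)\in\mathbb{Z}[u,v]$ be a quadratic form and let $r\in\mathbb{N}$. Then there are lattices $\Lambda_1,\ldots,\Lambda_N\subseteq\mathbb{Z}^2$ with $N\le 2^{\Omega(r)}$ such that $Q(u,v)\equiv 0\pmod r$ holds for $(u,v)\in\mathbb{Z}^2$ if and only if $(u,v)\in\bigcup_{n=1}^N\Lambda_n$.
   Context: $\Omega(r)$ denotes the number of prime factors of $r$ counted with multiplicity. *)

theory Defs
  imports "HOL-Computational_Algebra.Primes" "HOL-Number_Theory.Cong"
begin

definition bigOmega :: "nat \<Rightarrow> nat" where
  "bigOmega r = size (prime_factorization r)"

text \<open>A lattice in Z^2: an additive subgroup of Z^2 of full rank (finite index).\<close>
definition int_lattice :: "(int \<times> int) set \<Rightarrow> bool" where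
  "int_lattice L \<longleftrightarrow>
     (0, 0) \<in> L \<and>
     (\<forall>x\<in>L. \<forall>y\<in>L. (fst x + fst y, snd x + snd y) \<in> L) \<and>
     (\<forall>x\<in>L. (- fst x, - snd x) \<in> L) \<and>
     (\<exists>m::int. m > 0 \<and> (\<forall>u v. (m * u, m * v) \<in> L))"

end

theory Submission
  imports Defs
begin

definition qf :: "int \<Rightarrow> int \<Rightarrow> int \<Rightarrow> int \<Rightarrow> int \<Rightarrow> int" where
  "qf a b c u v = a * u\<^sup>2 + b * u * v + c * v\<^sup>2"

fun app :: "int \<times> int \<times> int \<times> int \<Rightarrow> int \<times> int \<Rightarrow> int \<times> int" where
  "app (al, be, ga, de) (x, y) = (al * x + be * y, ga * x + de * y)"
fun det4 :: "int \<times> int \<times> int \<times> int \<Rightarrow> int" where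
  "det4 (al, be, ga, de) = al * de - be * ga"
fun cA :: "int \<Rightarrow> int \<Rightarrow> int \<Rightarrow> int \<times> int \<times> int \<times> int \<Rightarrow> int" where
  "cA a b c (al, be, ga, de) = a * al\<^sup>2 + b * al * ga + c * ga\<^sup>2"
fun cB :: "int \<Rightarrow> int \<Rightarrow> int \<Rightarrow> int \<times> int \<times> int \<times> int \<Rightarrow> int" where
  "cB a b c (al, be, ga, de) = 2 * a * al * be + b * (al * de + be * ga) + 2 * c * ga * de"
fun cC :: "int \<Rightarrow> int \<Rightarrow> int \<Rightarrow> int \<times> int \<times> int \<times> int \<Rightarrow> int" where
  "cC a b c (al, be, ga, de) = a * be\<^sup>2 + b * be * de + c * de\<^sup>2"

lemma qf_app:
  assumes "app M (x, y) = (u, v)"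
  shows "qf a b c u v = qf (cA a b c M) (cB a b c M) (cC a b c M) x y"
  using assms by (cases M) (auto simp: qf_def power2_eq_square algebra_simps)

definition good :: "int \<Rightarrow> int \<Rightarrow> int \<Rightarrow> int \<Rightarrow> int \<times> int \<times> int \<times> int \<Rightarrow> bool" where
  "good P a b c M \<longleftrightarrow> det4 M \<noteq> 0 \<and> P dvd cA a b c M \<and> P dvd cB a b c M \<and> P dvd cC a b c M"

lemma lattice_image:
  assumes L: "int_lattice L" and d: "det4 M \<noteq> 0"
  shows "int_lattice (app M ` L)"
proof -
  obtain al be ga de where M: "M = (al, be, ga, de)" by (cases M) auto
  define d where "d = al * de - be * ga"
  have d0: "d \<noteq> 0" using d M d_def by simp
  from L obtain m where m: "m > 0" "\<forall>u v. (m * u, m * v) \<in> L"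
    unfolding int_lattice_def by blast
  have z: "(0, 0) \<in> app M ` L"
    using L unfolding int_lattice_def M by (auto intro!: image_eqI[where x="(0,0)"])
  have add: "\<forall>x\<in>app M ` L. \<forall>y\<in>app M ` L. (fst x + fst y, snd x + snd y) \<in> app M ` L"
  proof (intro ballI)
    fix x y assume "x \<in> app M ` L" "y \<in> app M ` L"
    then obtain x1 x2 y1 y2 where "(x1, x2) \<in> L" "(y1, y2) \<in> L" "x = app M (x1, x2)" "y = app M (y1, y2)"
      by auto
    moreover have "(x1 + y1, x2 + y2) \<in> L" using L calculation(1,2) unfolding int_lattice_def by force
    ultimately show "(fst x + fst y, snd x + snd y) \<in> app M ` L"
      unfolding M by (auto simp: algebra_simps intro!: image_eqI[where x="(x1 + y1, x2 + y2)"])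
  qed
  have neg: "\<forall>x\<in>app M ` L. (- fst x, - snd x) \<in> app M ` L"
  proof
    fix x assume "x \<in> app M ` L"
    then obtain x1 x2 where "(x1, x2) \<in> L" "x = app M (x1, x2)" by auto
    moreover have "(- x1, - x2) \<in> L" using L calculation(1) unfolding int_lattice_def by force
    ultimately show "(- fst x, - snd x) \<in> app M ` L"
      unfolding M by (auto simp: algebra_simps intro!: image_eqI[where x="(- x1, - x2)"])
  qed
  have mm: "\<forall>u v. (m * d * d * u, m * d * d * v) \<in> app M ` L"
  proof (intro allI)
    fix u v
    have "(m * (de * d * u - be * d * v), m * (- ga * d * u + al * d * v)) \<in> L" using m by blast
    moreover have "app M (m * (de * d * u - be * d * v), m * (- ga * d * u + al * d * v))
        = (m * d * d * u, m * d * d * v)"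
      unfolding M d_def by (simp add: algebra_simps)
    ultimately show "(m * d * d * u, m * d * d * v) \<in> app M ` L" by (metis image_eqI)
  qed
  have "0 < d * d" using d0 by (auto simp: zero_less_mult_iff linorder_neq_iff)
  then have "m * d * d > 0" using m by (metis mult.assoc mult_pos_pos)
  then show ?thesis unfolding int_lattice_def using z add neg mm by blast
qed

lemma card_le2:
  assumes "finite R" "\<And>x y z. x \<in> R \<Longrightarrow> y \<in> R \<Longrightarrow> z \<in> R \<Longrightarrow> x = y \<or> x = z \<or> y = z"
  shows "card R \<le> 2"
proof (cases "R = {}")
  case True then show ?thesis by simp
next
  case False
  then obtain x where x: "x \<in> R" by blast
  have "card (R - {x}) \<le> Suc 0"
    using assms x by (subst card_le_Suc0_iff_eq) blast+
  moreover have "card R = Suc (card (R - {x}))" using assms(1) x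
    by (metis card_Suc_Diff1)
  ultimately show ?thesis by simp
qed

lemma small_dvd: "(P::int) dvd x \<Longrightarrow> \<bar>x\<bar> < P \<Longrightarrow> x = 0"
  using dvd_imp_le_int by force

lemma two_roots:
  fixes P a b c t1 t2 :: int
  assumes p: "prime P" and t: "t1 \<in> {0..<P}" "t2 \<in> {0..<P}" "t1 \<noteq> t2"
    and r: "P dvd a * t1\<^sup>2 + b * t1 + c" "P dvd a * t2\<^sup>2 + b * t2 + c"
  shows "P dvd a * (t1 + t2) + b"
proof -
  have "P dvd (a * t1\<^sup>2 + b * t1 + c) - (a * t2\<^sup>2 + b * t2 + c)" using r by (rule dvd_diff)
  also have "(a * t1\<^sup>2 + b * t1 + c) - (a * t2\<^sup>2 + b * t2 + c) = (t1 - t2) * (a * (t1 + t2) + b)"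
    by (simp add: power2_eq_square algebra_simps)
  finally have "P dvd (t1 - t2) * (a * (t1 + t2) + b)" .
  moreover have "\<not> P dvd (t1 - t2)"
  proof
    assume "P dvd t1 - t2"
    moreover have "\<bar>t1 - t2\<bar> < P" using t by auto
    ultimately show False using small_dvd t(3) by force
  qed
  ultimately show ?thesis using p by (simp add: prime_dvd_mult_iff)
qed

lemma keyp:
  fixes P a b c :: int
  assumes p: "prime P"
  shows "\<exists>Ms. length Ms \<le> 2 \<and> (\<forall>M\<in>set Ms. good P a b c M) \<and>
    (\<forall>u v. P dvd qf a b c u v \<longrightarrow> (\<exists>M\<in>set Ms. \<exists>x y. app M (x, y) = (u, v)))"
proof (cases "P dvd a \<and> P dvd b \<and> P dvd c")
  case True
  show ?thesis
    by (rule exI[where x="[(1,0,0,1)]"]) (use True in \<open>auto simp: good_def\<close>)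
next
  case nd: False
  have P0: "P > 1" using p prime_gt_1_int by blast
  define R where "R = {t \<in> {0..<P}. P dvd a * t\<^sup>2 + b * t + c}"
  have fR: "finite R" unfolding R_def by (rule finite_subset[of _ "{0..<P}"]) auto
  define Mt where "Mt t = (t, P, 1::int, 0::int)" for t :: int
  define Minf where "Minf = (1::int, 0::int, 0::int, P)"
  define Mo where "Mo = (P, 0::int, 0::int, P)"
  have gMt: "good P a b c (Mt t)" if "t \<in> R" for t
    using that P0 unfolding good_def Mt_def R_def by (auto simp: power2_eq_square algebra_simps)
  have gMinf: "good P a b c Minf" if "P dvd a"
    using that P0 unfolding good_def Minf_def by (auto simp: power2_eq_square algebra_simps)
  have gMo: "good P a b c Mo"
    using P0 unfolding good_def Mo_def by (auto simp: power2_eq_square algebra_simps)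
  have pa1: "card R \<le> 1" if "P dvd a"
  proof -
    have "\<forall>x\<in>R. \<forall>y\<in>R. x = y"
    proof (intro ballI, rule ccontr)
      fix x y assume xy: "x \<in> R" "y \<in> R" "x \<noteq> y"
      have "P dvd a * (x + y) + b" using two_roots[OF p _ _ xy(3)] xy unfolding R_def by auto
      then have "P dvd b" using that by (metis dvd_add_right_iff dvd_mult2)
      moreover have "P dvd a * x\<^sup>2 + b * x + c" using xy R_def by auto
      ultimately have "P dvd c" using that
        by (metis dvd_add_right_iff dvd_mult2 dvd_mult)
      then show False using nd that \<open>P dvd b\<close> by blast
    qed
    then show ?thesis using card_le_Suc0_iff_eq[OF fR] by simp
  qed
  have c2: "card R \<le> 2"
  proof (rule card_le2[OF fR])
    fix x y z assume xyz: "x \<in> R" "y \<in> R" "z \<in> R"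
    show "x = y \<or> x = z \<or> y = z"
    proof (rule ccontr)
      assume ne: "\<not> (x = y \<or> x = z \<or> y = z)"
      have 1: "P dvd a * (x + y) + b" using two_roots[OF p _ _ _] xyz ne unfolding R_def by auto
      have 2: "P dvd a * (x + z) + b" using two_roots[OF p _ _ _] xyz ne unfolding R_def by auto
      have "P dvd (a * (x + y) + b) - (a * (x + z) + b)" using 1 2 by (rule dvd_diff)
      also have "(a * (x + y) + b) - (a * (x + z) + b) = a * (y - z)" by (simp add: algebra_simps)
      finally have "P dvd a * (y - z)" .
      moreover have "\<not> P dvd (y - z)"
      proof
        assume "P dvd y - z"
        moreover have "y \<in> {0..<P}" "z \<in> {0..<P}" using xyz R_def by auto
        then have "\<bar>y - z\<bar> < P" by auto
        ultimately show False using small_dvd ne by force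
      qed
      ultimately have "P dvd a" using p by (simp add: prime_dvd_mult_iff)
      then have "card R \<le> 1" by (rule pa1)
      then show False using card_le_Suc0_iff_eq[OF fR] xyz ne by auto
    qed
  qed
  define Ms where "Ms = (if P dvd a then [Minf] else []) @ map Mt (sorted_list_of_set R)
     @ (if R = {} \<and> \<not> P dvd a then [Mo] else [])"
  have len: "length Ms \<le> 2"
    using c2 pa1 fR unfolding Ms_def by (auto simp: card_gt_0_iff)
  have gd: "\<forall>M\<in>set Ms. good P a b c M"
    unfolding Ms_def using gMt gMinf gMo fR by auto
  have cov: "\<exists>M\<in>set Ms. \<exists>x y. app M (x, y) = (u, v)" if sol: "P dvd qf a b c u v" for u v
  proof (cases "P dvd v")
    case True
    then obtain v' where v': "v = P * v'" by auto
    have "qf a b c u v = a * u\<^sup>2 + P * (b * u * v' + c * P * v'\<^sup>2)"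
      unfolding qf_def v' by (simp add: power2_eq_square algebra_simps)
    then have "P dvd a * u\<^sup>2" using sol by (metis dvd_add_left_iff dvd_triv_left)
    then have "P dvd a \<or> P dvd u" using p by (simp add: prime_dvd_mult_iff prime_dvd_power_iff)
    then show ?thesis
    proof
      assume "P dvd a"
      then have "Minf \<in> set Ms" unfolding Ms_def by simp
      moreover have "app Minf (u, v') = (u, v)" unfolding Minf_def v' by simp
      ultimately show ?thesis by blast
    next
      assume pu: "P dvd u"
      then obtain u' where u': "u = P * u'" by auto
      show ?thesis
      proof (cases "R = {} \<and> \<not> P dvd a")
        case True
        then have "Mo \<in> set Ms" unfolding Ms_def by simp
        moreover have "app Mo (u', v') = (u, v)" unfolding Mo_def v' u' by simp
        ultimately show ?thesis by blast
      next
        case False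
        show ?thesis
        proof (cases "P dvd a")
          case True
          then have "Minf \<in> set Ms" unfolding Ms_def by simp
          moreover have "app Minf (u, v') = (u, v)" unfolding Minf_def v' by simp
          ultimately show ?thesis by blast
        next
          case na: False
          with False obtain t where t: "t \<in> R" by blast
          then have "Mt t \<in> set Ms" unfolding Ms_def using fR by simp
          moreover have "app (Mt t) (v, u' - t * v') = (u, v)" unfolding Mt_def v' u'
            by (simp add: algebra_simps)
          ultimately show ?thesis by blast
        qed
      qed
    qed
  next
    case nv: False
    have "coprime v P" using nv p by (simp add: prime_imp_coprime ac_simps)
    then obtain w where w: "[v * w = 1] (mod P)" using cong_solve_coprime_int by blast
    define t where "t = (u * w) mod P"
    have tP: "t \<in> {0..<P}" unfolding t_def using P0 by simp
    have "P dvd (v * w - 1)" using w by (simp add: cong_iff_dvd_diff)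
    then obtain j where j: "v * w - 1 = P * j" by auto
    have "u - t * v = u * (1 - v * w) + P * ((u * w) div P) * v"
      unfolding t_def by (simp add: algebra_simps minus_mod_eq_mult_div[symmetric])
    also have "\<dots> = P * (((u * w) div P) * v - u * j)" using j by (simp add: algebra_simps)
    finally obtain k where k: "u = t * v + P * k" by (metis add_diff_cancel_left' diff_add_cancel)
    have "qf a b c u v = v\<^sup>2 * (a * t\<^sup>2 + b * t + c) + P * (k * (2 * a * t * v + b * v) + a * P * k\<^sup>2)"
      unfolding qf_def k by (simp add: power2_eq_square algebra_simps)
    then have "P dvd v\<^sup>2 * (a * t\<^sup>2 + b * t + c)" using sol by (metis dvd_add_left_iff dvd_triv_left)
    then have "P dvd a * t\<^sup>2 + b * t + c" using p nv by (simp add: prime_dvd_mult_iff prime_dvd_power_iff)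
    then have "t \<in> R" unfolding R_def using tP by simp
    then have "Mt t \<in> set Ms" unfolding Ms_def using fR by simp
    moreover have "app (Mt t) (v, k) = (u, v)" unfolding Mt_def k by (simp add: algebra_simps)
    ultimately show ?thesis by blast
  qed
  show ?thesis using len gd cov by blast
qed

lemma combine:
  assumes "\<forall>M\<in>set Ms. \<exists>Ls. length Ls \<le> K \<and> (\<forall>L\<in>set Ls. int_lattice L) \<and> S M = \<Union>(set Ls)"
  shows "\<exists>Ls. length Ls \<le> length Ms * K \<and> (\<forall>L\<in>set Ls. int_lattice L) \<and> (\<Union>M\<in>set Ms. S M) = \<Union>(set Ls)"
  using assms
proof (induction Ms)
  case Nil
  then show ?case by (intro exI[where x="[]"]) simp
next
  case (Cons M Ms)
  then obtain Ls1 where 1: "length Ls1 \<le> K" "\<forall>L\<in>set Ls1. int_lattice L" "S M = \<Union>(set Ls1)" by auto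
  from Cons obtain Ls2 where 2: "length Ls2 \<le> length Ms * K" "\<forall>L\<in>set Ls2. int_lattice L"
     "(\<Union>M\<in>set Ms. S M) = \<Union>(set Ls2)" by auto
  show ?case using 1 2 by (intro exI[where x="Ls1 @ Ls2"]) auto
qed

lemma bigOmega_mult:
  assumes "prime p" "s \<ge> 1"
  shows "bigOmega (p * s) = Suc (bigOmega s)"
proof -
  have "p \<noteq> 0" "s \<noteq> 0" using assms prime_gt_0_nat by auto
  then show ?thesis using assms unfolding bigOmega_def
    by (simp add: prime_factorization_mult prime_factorization_prime)
qed

lemma main:
  fixes r :: nat
  assumes "r \<ge> 1"
  shows "\<exists>Ls :: (int \<times> int) set list.
           length Ls \<le> 2 ^ bigOmega r \<and>
           (\<forall>L\<in>set Ls. int_lattice L) \<and>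
           (\<forall>u v :: int. [qf a b c u v = 0] (mod int r) \<longleftrightarrow> (u, v) \<in> \<Union> (set Ls))"
  using assms
proof (induction r arbitrary: a b c rule: less_induct)
  case (less r)
  show ?case
  proof (cases "r = 1")
    case True
    have "int_lattice UNIV" unfolding int_lattice_def by (auto intro: exI[where x=1])
    then show ?thesis using True by (intro exI[where x="[UNIV]"]) (simp add: bigOmega_def)
  next
    case False
    then obtain p where p: "prime p" "p dvd r" using prime_factor_nat by blast
    define s where "s = r div p"
    have rs: "r = p * s" using p s_def by simp
    have s1: "s \<ge> 1" using rs less.prems by (cases s) auto
    have p1: "p > 1" using p prime_gt_1_nat by blast
    have sr: "s < r" using rs s1 p1 by simp
    have om: "bigOmega r = Suc (bigOmega s)" using rs bigOmega_mult p s1 by simp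
    define P where "P = int p"
    have P: "prime P" using p P_def by simp
    obtain Ms where Ms: "length Ms \<le> 2" "\<forall>M\<in>set Ms. good P a b c M"
      "\<forall>u v. P dvd qf a b c u v \<longrightarrow> (\<exists>M\<in>set Ms. \<exists>x y. app M (x, y) = (u, v))"
      using keyp[OF P, of a b c] by blast
    define S where "S M = app M ` {(x, y). [qf (cA a b c M div P) (cB a b c M div P) (cC a b c M div P) x y = 0] (mod int s)}" for M
    have qfP: "qf a b c u v = P * qf (cA a b c M div P) (cB a b c M div P) (cC a b c M div P) x y"
      if "good P a b c M" "app M (x, y) = (u, v)" for M x y u v
    proof -
      have "qf a b c u v = qf (cA a b c M) (cB a b c M) (cC a b c M) x y" using qf_app[OF that(2)] .
      also have "\<dots> = P * qf (cA a b c M div P) (cB a b c M div P) (cC a b c M div P) x y"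
        using that(1) unfolding good_def qf_def by (auto simp: algebra_simps elim!: dvdE)
      finally show ?thesis .
    qed
    have each: "\<forall>M\<in>set Ms. \<exists>Ls. length Ls \<le> 2 ^ bigOmega s \<and> (\<forall>L\<in>set Ls. int_lattice L) \<and> S M = \<Union>(set Ls)"
    proof
      fix M assume M: "M \<in> set Ms"
      obtain Ls0 where L0: "length Ls0 \<le> 2 ^ bigOmega s" "\<forall>L\<in>set Ls0. int_lattice L"
        "\<forall>u v. [qf (cA a b c M div P) (cB a b c M div P) (cC a b c M div P) u v = 0] (mod int s) \<longleftrightarrow> (u, v) \<in> \<Union> (set Ls0)"
        using less.IH[OF sr s1] by blast
      have "{(x, y). [qf (cA a b c M div P) (cB a b c M div P) (cC a b c M div P) x y = 0] (mod int s)} = \<Union> (set Ls0)"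
        using L0(3) by auto
      then have "S M = \<Union>(set (map (image (app M)) Ls0))" unfolding S_def by auto
      moreover have "\<forall>L\<in>set (map (image (app M)) Ls0). int_lattice L"
        using L0(2) lattice_image M Ms(2) unfolding good_def by auto
      ultimately show "\<exists>Ls. length Ls \<le> 2 ^ bigOmega s \<and> (\<forall>L\<in>set Ls. int_lattice L) \<and> S M = \<Union>(set Ls)"
        using L0(1) by (intro exI[where x="map (image (app M)) Ls0"]) simp
    qed
    obtain Ls where Ls: "length Ls \<le> length Ms * 2 ^ bigOmega s" "\<forall>L\<in>set Ls. int_lattice L"
      "(\<Union>M\<in>set Ms. S M) = \<Union>(set Ls)" using combine[OF each] by blast
    have len: "length Ls \<le> 2 ^ bigOmega r" using Ls(1) Ms(1) om
      by (metis dual_order.trans mult_le_mono1 power_Suc)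
    have eqv: "[qf a b c u v = 0] (mod int r) \<longleftrightarrow> (u, v) \<in> (\<Union>M\<in>set Ms. S M)" for u v
    proof
      assume "[qf a b c u v = 0] (mod int r)"
      then have rd: "int r dvd qf a b c u v" by (simp add: cong_0_iff)
      then have "P dvd qf a b c u v" using rs P_def by (metis dvd_mult_left of_nat_mult)
      then obtain M x y where M: "M \<in> set Ms" "app M (x, y) = (u, v)" using Ms(3) by blast
      have g: "good P a b c M" using M Ms(2) by blast
      have "P * int s dvd P * qf (cA a b c M div P) (cB a b c M div P) (cC a b c M div P) x y"
        using rd qfP[OF g M(2)] rs P_def by simp
      then have "int s dvd qf (cA a b c M div P) (cB a b c M div P) (cC a b c M div P) x y"
        using P_def p1 by simp
      then have "(u, v) \<in> S M" unfolding S_def using M(2) by (auto simp: cong_0_iff intro!: image_eqI[where x="(x,y)"])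
      then show "(u, v) \<in> (\<Union>M\<in>set Ms. S M)" using M(1) by blast
    next
      assume "(u, v) \<in> (\<Union>M\<in>set Ms. S M)"
      then obtain M x y where M: "M \<in> set Ms" "app M (x, y) = (u, v)"
        and c: "int s dvd qf (cA a b c M div P) (cB a b c M div P) (cC a b c M div P) x y"
        unfolding S_def by (auto simp: cong_0_iff)
      have g: "good P a b c M" using M Ms(2) by blast
      have "P * int s dvd qf a b c u v" using qfP[OF g M(2)] c by simp
      then show "[qf a b c u v = 0] (mod int r)" using rs P_def by (simp add: cong_0_iff)
    qed
    show ?thesis using len Ls(2) eqv Ls(3) by (intro exI[where x=Ls]) auto
  qed
qed

theorem lemma6:
  fixes a b c :: int and r :: nat
  assumes "r \<ge> 1"
  shows "\<exists>Ls :: (int \<times> int) set list.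
           length Ls \<le> 2 ^ bigOmega r \<and>
           (\<forall>L\<in>set Ls. int_lattice L) \<and>
           (\<forall>u v :: int. [a * u\<^sup>2 + b * u * v + c * v\<^sup>2 = 0] (mod int r)
                \<longleftrightarrow> (u, v) \<in> \<Union> (set Ls))"
  using main[OF assms, of a b c] unfolding qf_def .

end
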